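(* Let $P$ be a 6-stack and let $Q$ be a retract of $P$ which (with the induced order) is isomorphic to a tower of sections. If there is an integer $i\ge 0$ with $\emptyset\ne P(i)\subseteq Q$, then $Q=P$.
   Context: All posets are finite. For a poset $P$ and $p\in P$, the rank $r(p)$ of $p$ is the largest $m$ such that there is a chain $p_0<\dots<p_m=p$ in $P$. $P$ is ranked of rank $r(P)$ if every maximal chain has exactly $r(P)+1$ elements. For $0\le i\le j$, $P(i,j)=\{p\in P:i\le r(p)\le j\}$, $P(i)=P(i,i)$ (induced order). A subset $Q\subseteq P$ (induced order) is a retract of $P$ if there is an order-preserving $f:P\to Q$ with $f(q)=q$ for all $q\in Q$. The 6-crown $C_6$ is the poset on $\{x_0,x_1,x_2,y_0,y_1,y_2\}$ whose only strict comparabilities are $x_0<y_0>x_1<y_1>x_2<y_2>x_0$. A 6-stack is a ranked poset $P$ of rank $n\ge1$ such that $P(i,i+1)\cong C_6$ for each $0\le i<n$. The ordinal sum of posets $P_1,\dots,P_k$ ($k\ge1$) is their disjoint union ordered by the orders of the $P_i$ together with $p<q$ whenever $p\in P_i,q\in P_j,i<j$. A section is either a two-element antichain or a poset on the set $\{[i,k]: 0\le i\le 2,\ 0\le k\le n\}$ (with $3(n+1)$ distinct elements), for some $n\ge 1$, such that: (1) $[i,k]<[i,l]$ whenever $0\le k<l\le n$; (2) for each $k$, $\{[0,k],[1,k],[2,k]\}$ is an antichain; (3) $[i,k]<[j,l]$ implies $[i+1,k]<[j+1,l]$ (first indices mod $3$); (4) for each $0\le k<n$ there are $i,j$ with $[i,k]\not<[j,k+1]$.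 A tower of sections is an ordinal sum of one or more sections. *)

theory Defs
  imports Main
begin

definition strict_poset :: "'a set \<Rightarrow> ('a \<Rightarrow> 'a \<Rightarrow> bool) \<Rightarrow> bool" where
  "strict_poset P lt \<longleftrightarrow>
     (\<forall>x\<in>P. \<not> lt x x) \<and> (\<forall>x\<in>P. \<forall>y\<in>P. \<forall>z\<in>P. lt x y \<longrightarrow> lt y z \<longrightarrow> lt x z)"

definition fin_poset :: "'a set \<Rightarrow> ('a \<Rightarrow> 'a \<Rightarrow> bool) \<Rightarrow> bool" where
  "fin_poset P lt \<longleftrightarrow> finite P \<and> strict_poset P lt"

definition rank :: "'a set \<Rightarrow> ('a \<Rightarrow> 'a \<Rightarrow> bool) \<Rightarrow> 'a \<Rightarrow> nat" where
  "rank P lt p = Max {length xs - 1 | xs. xs \<noteq> [] \<and> set xs \<subseteq> P \<and> sorted_wrt lt xs \<and> last xs = p}"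

definition is_chain :: "'a set \<Rightarrow> ('a \<Rightarrow> 'a \<Rightarrow> bool) \<Rightarrow> 'a set \<Rightarrow> bool" where
  "is_chain P lt C \<longleftrightarrow> C \<subseteq> P \<and> (\<forall>x\<in>C. \<forall>y\<in>C. x = y \<or> lt x y \<or> lt y x)"

definition maximal_chain :: "'a set \<Rightarrow> ('a \<Rightarrow> 'a \<Rightarrow> bool) \<Rightarrow> 'a set \<Rightarrow> bool" where
  "maximal_chain P lt C \<longleftrightarrow> is_chain P lt C \<and> (\<forall>D. is_chain P lt D \<and> C \<subseteq> D \<longrightarrow> D = C)"

definition ranked_of_rank :: "'a set \<Rightarrow> ('a \<Rightarrow> 'a \<Rightarrow> bool) \<Rightarrow> nat \<Rightarrow> bool" where
  "ranked_of_rank P lt n \<longleftrightarrow> (\<forall>C. maximal_chain P lt C \<longrightarrow> card C = n + 1)"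

definition levels :: "'a set \<Rightarrow> ('a \<Rightarrow> 'a \<Rightarrow> bool) \<Rightarrow> nat \<Rightarrow> nat \<Rightarrow> 'a set" where
  "levels P lt i j = {p \<in> P. i \<le> rank P lt p \<and> rank P lt p \<le> j}"

abbreviation level :: "'a set \<Rightarrow> ('a \<Rightarrow> 'a \<Rightarrow> bool) \<Rightarrow> nat \<Rightarrow> 'a set" where
  "level P lt i \<equiv> levels P lt i i"

definition order_iso :: "'a set \<Rightarrow> ('a \<Rightarrow> 'a \<Rightarrow> bool) \<Rightarrow> 'b set \<Rightarrow> ('b \<Rightarrow> 'b \<Rightarrow> bool) \<Rightarrow> bool" where
  "order_iso A ltA B ltB \<longleftrightarrow>
     (\<exists>f. bij_betw f A B \<and> (\<forall>x\<in>A. \<forall>y\<in>A. ltA x y \<longleftrightarrow> ltB (f x) (f y)))"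

text \<open>The 6-crown on {0..5}: x_i = i, y_i = 3 + i;
  x0<y0>x1<y1>x2<y2>x0.\<close>
definition crown6 :: "nat set" where "crown6 = {0..5}"

definition crown6_lt :: "nat \<Rightarrow> nat \<Rightarrow> bool" where
  "crown6_lt a b \<longleftrightarrow> (a, b) \<in> {(0,3), (1,3), (1,4), (2,4), (2,5), (0,5)}"

definition six_stack :: "'a set \<Rightarrow> ('a \<Rightarrow> 'a \<Rightarrow> bool) \<Rightarrow> bool" where
  "six_stack P lt \<longleftrightarrow> fin_poset P lt \<and>
     (\<exists>n\<ge>1. ranked_of_rank P lt n \<and>
        (\<forall>i<n. order_iso (levels P lt i (i+1)) lt crown6 crown6_lt))"

definition retract :: "'a set \<Rightarrow> ('a \<Rightarrow> 'a \<Rightarrow> bool) \<Rightarrow> 'a set \<Rightarrow> bool" where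
  "retract P lt Q \<longleftrightarrow> Q \<subseteq> P \<and>
     (\<exists>f. (\<forall>x\<in>P. f x \<in> Q) \<and>
          (\<forall>x\<in>P. \<forall>y\<in>P. lt x y \<longrightarrow> (f x = f y \<or> lt (f x) (f y))) \<and>
          (\<forall>q\<in>Q. f q = q))"

text \<open>Sections. A section is a two-element antichain, or a poset on
  {[i,k] : 0 \<le> i \<le> 2, 0 \<le> k \<le> n} (here [i,k] = (i,k)) for some n \<ge> 1 with (1)-(4).\<close>
definition is_section :: "(nat \<times> nat) set \<Rightarrow> ((nat \<times> nat) \<Rightarrow> (nat \<times> nat) \<Rightarrow> bool) \<Rightarrow> bool" where
  "is_section S R \<longleftrightarrow>
     (card S = 2 \<and> (\<forall>x\<in>S. \<forall>y\<in>S. \<not> R x y)) \<or>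
     (\<exists>n\<ge>1. S = {0..2} \<times> {0..n} \<and> strict_poset S R \<and>
        (\<forall>i\<le>2. \<forall>k l. k < l \<and> l \<le> n \<longrightarrow> R (i,k) (i,l)) \<and>
        (\<forall>k\<le>n. \<forall>i\<le>2. \<forall>j\<le>2. \<not> R (i,k) (j,k)) \<and>
        (\<forall>i\<le>2. \<forall>j\<le>2. \<forall>k\<le>n. \<forall>l\<le>n.
            R (i,k) (j,l) \<longrightarrow> R ((i+1) mod 3, k) ((j+1) mod 3, l)) \<and>
        (\<forall>k<n. \<exists>i\<le>2. \<exists>j\<le>2. \<not> R (i,k) (j,k+1)))"

definition osum_carrier :: "('b set \<times> ('b \<Rightarrow> 'b \<Rightarrow> bool)) list \<Rightarrow> (nat \<times> 'b) set" where
  "osum_carrier ss = {(m, s). m < length ss \<and> s \<in> fst (ss ! m)}"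

definition osum_lt :: "('b set \<times> ('b \<Rightarrow> 'b \<Rightarrow> bool)) list \<Rightarrow> (nat \<times> 'b) \<Rightarrow> (nat \<times> 'b) \<Rightarrow> bool" where
  "osum_lt ss x y \<longleftrightarrow> fst x < fst y \<or> (fst x = fst y \<and> snd (ss ! fst x) (snd x) (snd y))"

definition iso_to_tower_of_sections :: "'a set \<Rightarrow> ('a \<Rightarrow> 'a \<Rightarrow> bool) \<Rightarrow> bool" where
  "iso_to_tower_of_sections Q lt \<longleftrightarrow>
     (\<exists>ss. ss \<noteq> [] \<and> (\<forall>sec\<in>set ss. is_section (fst sec) (snd sec)) \<and>
        order_iso Q lt (osum_carrier ss) (osum_lt ss))"

end

theory Submission
  imports Defs
begin

lemma sp_irr: "strict_poset P lt \<Longrightarrow> x\<in>P \<Longrightarrow> \<not> lt x x" unfolding strict_poset_def by blast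
lemma sp_trans: "strict_poset P lt \<Longrightarrow> x\<in>P \<Longrightarrow> y\<in>P \<Longrightarrow> z\<in>P \<Longrightarrow> lt x y \<Longrightarrow> lt y z \<Longrightarrow> lt x z"
  unfolding strict_poset_def by blast
lemma fp_sp: "fin_poset P lt \<Longrightarrow> strict_poset P lt" unfolding fin_poset_def by blast
lemma fp_fin: "fin_poset P lt \<Longrightarrow> finite P" unfolding fin_poset_def by blast


lemma sorted_last: "sorted_wrt lt xs \<Longrightarrow> xs \<noteq> [] \<Longrightarrow> a \<in> set xs \<Longrightarrow> a = last xs \<or> lt a (last xs)"
proof -
  assume s: "sorted_wrt lt xs" and ne: "xs \<noteq> []" and a: "a \<in> set xs"
  have e: "xs = butlast xs @ [last xs]" using ne by simp
  from s have "sorted_wrt lt (butlast xs @ [last xs])" using e by metis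
  hence "\<forall>x\<in>set (butlast xs). lt x (last xs)" by (simp add: sorted_wrt_append)
  moreover have "a \<in> set (butlast xs) \<or> a = last xs" using a e
    by (metis Un_iff empty_iff empty_set list.simps(15) set_append singletonD)
  ultimately show ?thesis by blast
qed

lemma sorted_cmp: "sorted_wrt lt xs \<Longrightarrow> a \<in> set xs \<Longrightarrow> b \<in> set xs \<Longrightarrow> a = b \<or> lt a b \<or> lt b a"
  by (induction xs) auto

lemma chain_distinct: "strict_poset P lt \<Longrightarrow> set xs \<subseteq> P \<Longrightarrow> sorted_wrt lt xs \<Longrightarrow> distinct xs"
proof (induction xs)
  case Nil then show ?case by simp
next
  case (Cons x xs)
  have "x \<notin> set xs"
  proof
    assume "x \<in> set xs"
    hence "lt x x" using Cons.prems(3) by simp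
    moreover have "x \<in> P" using Cons.prems(2) by simp
    ultimately show False using Cons.prems(1) unfolding strict_poset_def by blast
  qed
  then show ?case using Cons by simp
qed

lemma rank_set_fin:
  assumes "fin_poset P lt"
  shows "finite {length xs - 1 | xs. xs \<noteq> [] \<and> set xs \<subseteq> P \<and> sorted_wrt lt xs \<and> last xs = p}"
proof -
  have "{length xs - 1 | xs. xs \<noteq> [] \<and> set xs \<subseteq> P \<and> sorted_wrt lt xs \<and> last xs = p} \<subseteq> {..card P}"
  proof
    fix m assume "m \<in> {length xs - 1 | xs. xs \<noteq> [] \<and> set xs \<subseteq> P \<and> sorted_wrt lt xs \<and> last xs = p}"
    then obtain xs where xs: "m = length xs - 1" "set xs \<subseteq> P" "sorted_wrt lt xs" by blast
    have "distinct xs" using chain_distinct xs assms fin_poset_def by metis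
    hence "length xs = card (set xs)" by (simp add: distinct_card)
    also have "\<dots> \<le> card P" using xs assms by (simp add: fin_poset_def card_mono)
    finally show "m \<in> {..card P}" using xs by simp
  qed
  thus ?thesis using finite_subset by blast
qed

lemma rank_ex:
  assumes "fin_poset P lt" "p \<in> P"
  shows "\<exists>xs. xs \<noteq> [] \<and> set xs \<subseteq> P \<and> sorted_wrt lt xs \<and> last xs = p \<and> length xs = Suc (rank P lt p)"
proof -
  let ?S = "{length xs - 1 | xs. xs \<noteq> [] \<and> set xs \<subseteq> P \<and> sorted_wrt lt xs \<and> last xs = p}"
  have "0 \<in> ?S" using assms(2) by (intro CollectI exI[of _ "[p]"]) auto
  hence "rank P lt p \<in> ?S" unfolding rank_def using rank_set_fin[OF assms(1)] Max_in by blast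
  then obtain xs where "rank P lt p = length xs - 1" "xs \<noteq> []" "set xs \<subseteq> P" "sorted_wrt lt xs" "last xs = p" by blast
  thus ?thesis by (intro exI[of _ xs]) auto
qed

lemma rank_ge:
  assumes "fin_poset P lt" "xs \<noteq> []" "set xs \<subseteq> P" "sorted_wrt lt xs" "last xs = p"
  shows "length xs - 1 \<le> rank P lt p"
  unfolding rank_def using assms rank_set_fin[OF assms(1)] by (intro Max_ge) blast+

lemma rank_mono:
  assumes fp: "fin_poset P lt" and x: "x \<in> P" and y: "y \<in> P" and l: "lt x y"
  shows "rank P lt x < rank P lt y"
proof -
  obtain xs where xs: "xs \<noteq> []" "set xs \<subseteq> P" "sorted_wrt lt xs" "last xs = x" "length xs = Suc (rank P lt x)"
    using rank_ex[OF fp x] by blast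
  have "\<forall>a\<in>set xs. lt a y"
  proof
    fix a assume a: "a \<in> set xs"
    from sorted_last[OF xs(3) xs(1) a] xs(4) have "a = x \<or> lt a x" by simp
    moreover have aP: "a \<in> P" using a xs(2) by blast
    ultimately show "lt a y" using l sp_trans[OF fp_sp[OF fp] aP x y] by auto
  qed
  hence "sorted_wrt lt (xs @ [y])" using xs(3) by (simp add: sorted_wrt_append)
  hence "length (xs @ [y]) - 1 \<le> rank P lt y" using rank_ge[OF fp, of "xs @ [y]" y] xs y by simp
  thus ?thesis using xs by simp
qed

lemma rank_pred:
  assumes fp: "fin_poset P lt" and y: "y \<in> P" and r: "rank P lt y = Suc l"
  shows "\<exists>w\<in>P. lt w y \<and> rank P lt w = l"
proof -
  obtain xs where xs: "xs \<noteq> []" "set xs \<subseteq> P" "sorted_wrt lt xs" "last xs = y" "length xs = Suc (Suc l)"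
  proof -
    from rank_ex[OF fp y] obtain xs where "xs \<noteq> []" "set xs \<subseteq> P" "sorted_wrt lt xs" "last xs = y" "length xs = Suc (rank P lt y)" by blast
    thus ?thesis using that r by simp
  qed
  have e: "xs = butlast xs @ [last xs]" using xs(1) by simp
  have bne: "butlast xs \<noteq> []" using xs by (cases xs) auto
  define w where "w = last (butlast xs)"
  have wset: "w \<in> set (butlast xs)" using bne w_def by simp
  have sb: "sorted_wrt lt (butlast xs @ [last xs])" using xs(3) e by metis
  hence sb1: "sorted_wrt lt (butlast xs)" and sb2: "\<forall>a\<in>set (butlast xs). lt a (last xs)"
    by (simp_all add: sorted_wrt_append)
  have bsub: "set (butlast xs) \<subseteq> P" using xs(2) by (meson in_set_butlastD subset_iff)
  have wP: "w \<in> P" using wset bsub by blast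
  have lw: "lt w y" using sb2 wset xs(4) by blast
  have "length (butlast xs) - 1 \<le> rank P lt w" using rank_ge[OF fp bne bsub sb1] w_def by simp
  hence "l \<le> rank P lt w" using xs by simp
  moreover have "rank P lt w < Suc l" using rank_mono[OF fp wP y lw] r by simp
  ultimately show ?thesis using wP lw by (intro bexI[of _ w]) auto
qed

lemma rank_le_n:
  assumes fp: "fin_poset P lt" and ro: "ranked_of_rank P lt n" and x: "x \<in> P"
  shows "rank P lt x \<le> n"
proof -
  obtain xs where xs: "xs \<noteq> []" "set xs \<subseteq> P" "sorted_wrt lt xs" "last xs = x" "length xs = Suc (rank P lt x)"
    using rank_ex[OF fp x] by blast
  let ?C = "set xs"
  have finP: "finite P" using fp by (simp add: fin_poset_def)
  have cC: "is_chain P lt ?C" using xs sorted_cmp[OF xs(3)] by (simp add: is_chain_def)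
  let ?Cs = "{D. is_chain P lt D \<and> ?C \<subseteq> D}"
  have "?Cs \<subseteq> Pow P" by (auto simp: is_chain_def)
  hence finCs: "finite ?Cs" using finP by (meson finite_Pow_iff finite_subset)
  have CCs: "?C \<in> ?Cs" using cC by simp
  have "Max (card ` ?Cs) \<in> card ` ?Cs" using finCs CCs by (intro Max_in) auto
  then obtain D where D: "D \<in> ?Cs" "card D = Max (card ` ?Cs)" by auto
  have Dmax: "\<And>D'. D' \<in> ?Cs \<Longrightarrow> card D' \<le> card D" using D finCs by simp
  have finD: "finite D" using D finP by (auto simp: is_chain_def intro: finite_subset)
  have "maximal_chain P lt D"
    unfolding maximal_chain_def
  proof (intro conjI allI impI)
    show "is_chain P lt D" using D by simp
    fix D' assume a: "is_chain P lt D' \<and> D \<subseteq> D'"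
    hence "D' \<in> ?Cs" using D by auto
    hence "card D' \<le> card D" using Dmax by blast
    moreover have "finite D'" using a finP by (auto simp: is_chain_def intro: finite_subset)
    ultimately show "D' = D" using a card_subset_eq by (metis antisym card_mono)
  qed
  hence "card D = n + 1" using ro by (simp add: ranked_of_rank_def)
  moreover have "card ?C \<le> card D" using D(1) finD card_mono by blast
  moreover have "card ?C = length xs" using chain_distinct xs fp fin_poset_def distinct_card by metis
  ultimately show ?thesis using xs by simp
qed




lemma c_dn2: "c \<in> {3,4,5} \<Longrightarrow> \<exists>j\<in>{0,1,2}. \<exists>j'\<in>{0,1,2}. j \<noteq> j' \<and> crown6_lt j c \<and> crown6_lt j' c"
  unfolding crown6_lt_def by auto
lemma c_dn1: "c \<in> {3,4,5} \<Longrightarrow> j\<in>{0,1,2} \<Longrightarrow> j'\<in>{0,1,2} \<Longrightarrow> j \<noteq> j' \<Longrightarrow> \<not> crown6_lt j c \<Longrightarrow> \<not> crown6_lt j' c \<Longrightarrow> False"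
  unfolding crown6_lt_def by auto
lemma c_dnn: "c \<in> {3,4,5} \<Longrightarrow> \<exists>j\<in>{0,1,2}. \<not> crown6_lt j c"
  unfolding crown6_lt_def by auto
lemma c_dnc: "c \<in> {3,4,5} \<Longrightarrow> c' \<in> {3,4,5} \<Longrightarrow> c \<noteq> c' \<Longrightarrow> \<exists>j\<in>{0,1,2}. crown6_lt j c \<and> crown6_lt j c'"
  unfolding crown6_lt_def by auto
lemma c_up2: "j \<in> {0,1,2} \<Longrightarrow> \<exists>c\<in>{3,4,5}. \<exists>c'\<in>{3,4,5}. c \<noteq> c' \<and> crown6_lt j c \<and> crown6_lt j c'"
  unfolding crown6_lt_def by auto
lemma c_up1: "j \<in> {0,1,2} \<Longrightarrow> c\<in>{3,4,5} \<Longrightarrow> c'\<in>{3,4,5} \<Longrightarrow> c \<noteq> c' \<Longrightarrow> \<not> crown6_lt j c \<Longrightarrow> \<not> crown6_lt j c' \<Longrightarrow> False"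
  unfolding crown6_lt_def by auto
lemma c_upn: "j \<in> {0,1,2} \<Longrightarrow> \<exists>c\<in>{3,4,5}. \<not> crown6_lt j c"
  unfolding crown6_lt_def by auto
lemma c_upc: "j \<in> {0,1,2} \<Longrightarrow> j' \<in> {0,1,2} \<Longrightarrow> j \<noteq> j' \<Longrightarrow> \<exists>c\<in>{3,4,5}. crown6_lt j c \<and> crown6_lt j' c"
  unfolding crown6_lt_def by auto
lemma c_hi: "crown6_lt j c \<Longrightarrow> c \<in> {3,4,5::nat}" unfolding crown6_lt_def by auto
lemma c_lo: "crown6_lt j c \<Longrightarrow> j \<in> {0,1,2::nat}" unfolding crown6_lt_def by auto
lemma c_four_lo: "(a::nat) \<in> {0,1,2} \<Longrightarrow> b \<in> {0,1,2} \<Longrightarrow> c \<in> {0,1,2} \<Longrightarrow> d \<in> {0,1,2} \<Longrightarrow> distinct [a,b,c,d] \<Longrightarrow> False"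
  by auto
lemma c_four_hi: "(a::nat) \<in> {3,4,5} \<Longrightarrow> b \<in> {3,4,5} \<Longrightarrow> c \<in> {3,4,5} \<Longrightarrow> d \<in> {3,4,5} \<Longrightarrow> distinct [a,b,c,d] \<Longrightarrow> False"
  by auto

locale crown_lv =
  fixes P :: "'a set" and lt :: "'a \<Rightarrow> 'a \<Rightarrow> bool" and i :: nat and h :: "'a \<Rightarrow> nat"
  assumes fp: "fin_poset P lt"
    and bij: "bij_betw h (levels P lt i (Suc i)) crown6"
    and iff: "\<And>x y. x \<in> levels P lt i (Suc i) \<Longrightarrow> y \<in> levels P lt i (Suc i) \<Longrightarrow> lt x y \<longleftrightarrow> crown6_lt (h x) (h y)"
begin

abbreviation "r \<equiv> rank P lt"

lemma memLv: "x \<in> P \<Longrightarrow> r x = i \<or> r x = Suc i \<Longrightarrow> x \<in> levels P lt i (Suc i)"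
  unfolding levels_def by auto

lemma Lv_cases: "x \<in> levels P lt i (Suc i) \<Longrightarrow> x \<in> P \<and> (r x = i \<or> r x = Suc i)"
  unfolding levels_def by auto

lemma ltiff: "x \<in> P \<Longrightarrow> y \<in> P \<Longrightarrow> r x = i \<Longrightarrow> r y = Suc i \<Longrightarrow> lt x y \<longleftrightarrow> crown6_lt (h x) (h y)"
  using iff memLv by blast

lemma hinj: "x \<in> P \<Longrightarrow> y \<in> P \<Longrightarrow> r x = i \<or> r x = Suc i \<Longrightarrow> r y = i \<or> r y = Suc i \<Longrightarrow> h x = h y \<Longrightarrow> x = y"
  using bij memLv unfolding bij_betw_def inj_on_def by blast

lemma hsurj: "j \<in> crown6 \<Longrightarrow> \<exists>x\<in>levels P lt i (Suc i). h x = j"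
  using bij unfolding bij_betw_def by (metis imageE)

lemma hrange: "x \<in> levels P lt i (Suc i) \<Longrightarrow> h x \<in> crown6"
  using bij unfolding bij_betw_def by blast

lemma hhi: assumes y: "y \<in> P" and ry: "r y = Suc i" shows "h y \<in> {3,4,5}"
proof -
  obtain w where w: "w \<in> P" "lt w y" "r w = i" using rank_pred[OF fp y ry] by blast
  have "crown6_lt (h w) (h y)" using ltiff[OF w(1) y w(3) ry] w(2) by simp
  thus ?thesis by (rule c_hi)
qed

lemma hlo: assumes x: "x \<in> P" and rx: "r x = i" shows "h x \<in> {0,1,2}"
proof (rule ccontr)
  assume a: "h x \<notin> {0,1,2}"
  have "h x \<in> crown6" using hrange memLv x rx by blast
  hence hx: "h x \<in> {3,4,5}" using a unfolding crown6_def by auto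
  obtain j where j: "j \<in> {0,1,2}" "crown6_lt j (h x)" using c_dnn[OF hx] c_dn2[OF hx] by blast
  have "j \<in> crown6" using j unfolding crown6_def by auto
  then obtain x' where x': "x' \<in> levels P lt i (Suc i)" "h x' = j" using hsurj by blast
  have "lt x' x" using iff[OF x'(1) memLv[OF x]] x'(2) j rx by simp
  hence "r x' < r x" using rank_mono[OF fp] x' x unfolding levels_def by blast
  moreover have "r x' \<ge> i" using x' unfolding levels_def by auto
  ultimately show False using rx by simp
qed

lemma prelo: assumes j: "j \<in> {0,1,2}" shows "\<exists>x\<in>P. r x = i \<and> h x = j"
proof -
  have "j \<in> crown6" using j unfolding crown6_def by auto
  then obtain x where x: "x \<in> levels P lt i (Suc i)" "h x = j" using hsurj by blast
  have "x \<in> P" "r x = i \<or> r x = Suc i" using Lv_cases[OF x(1)] by auto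
  moreover have "r x \<noteq> Suc i" using hhi[of x] x j \<open>x \<in> P\<close> by auto
  ultimately show ?thesis using x by auto
qed

lemma prehi: assumes j: "j \<in> {3,4,5}" shows "\<exists>x\<in>P. r x = Suc i \<and> h x = j"
proof -
  have "j \<in> crown6" using j unfolding crown6_def by auto
  then obtain x where x: "x \<in> levels P lt i (Suc i)" "h x = j" using hsurj by blast
  have "x \<in> P" "r x = i \<or> r x = Suc i" using Lv_cases[OF x(1)] by auto
  moreover have "r x \<noteq> i" using hlo[of x] x j \<open>x \<in> P\<close> by auto
  ultimately show ?thesis using x by auto
qed

lemma dn2: assumes b: "b \<in> P" "r b = Suc i"
  shows "\<exists>a\<in>P. \<exists>a'\<in>P. r a = i \<and> r a' = i \<and> a \<noteq> a' \<and> lt a b \<and> lt a' b"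
proof -
  obtain j j' where jj: "j \<in> {0,1,2}" "j' \<in> {0,1,2}" "j \<noteq> j'" "crown6_lt j (h b)" "crown6_lt j' (h b)"
    using c_dn2[OF hhi[OF b]] by blast
  obtain a where a: "a \<in> P" "r a = i" "h a = j" using prelo[OF jj(1)] by blast
  obtain a' where a': "a' \<in> P" "r a' = i" "h a' = j'" using prelo[OF jj(2)] by blast
  show ?thesis using a a' jj ltiff[OF a(1) b(1) a(2) b(2)] ltiff[OF a'(1) b(1) a'(2) b(2)] by auto
qed

lemma dn1: assumes b: "b \<in> P" "r b = Suc i" and a: "a \<in> P" "a' \<in> P" "r a = i" "r a' = i" "a \<noteq> a'"
  and n: "\<not> lt a b" "\<not> lt a' b" shows False
proof -
  have "h a \<noteq> h a'" using hinj a by auto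
  thus False using c_dn1[OF hhi[OF b] hlo[OF a(1) a(3)] hlo[OF a(2) a(4)]] n
      ltiff[OF a(1) b(1) a(3) b(2)] ltiff[OF a(2) b(1) a(4) b(2)] by auto
qed

lemma dnn: assumes b: "b \<in> P" "r b = Suc i" shows "\<exists>a\<in>P. r a = i \<and> \<not> lt a b"
proof -
  obtain j where j: "j \<in> {0,1,2}" "\<not> crown6_lt j (h b)" using c_dnn[OF hhi[OF b]] by blast
  obtain a where a: "a \<in> P" "r a = i" "h a = j" using prelo[OF j(1)] by blast
  show ?thesis using a j ltiff[OF a(1) b(1) a(2) b(2)] by auto
qed

lemma dnc: assumes b: "b \<in> P" "r b = Suc i" and b': "b' \<in> P" "r b' = Suc i" and ne: "b \<noteq> b'"
  shows "\<exists>a\<in>P. r a = i \<and> lt a b \<and> lt a b'"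
proof -
  have "h b \<noteq> h b'" using hinj b b' ne by auto
  then obtain j where j: "j \<in> {0,1,2}" "crown6_lt j (h b)" "crown6_lt j (h b')"
    using c_dnc[OF hhi[OF b] hhi[OF b']] by blast
  obtain a where a: "a \<in> P" "r a = i" "h a = j" using prelo[OF j(1)] by blast
  show ?thesis using a j ltiff[OF a(1) b(1) a(2) b(2)] ltiff[OF a(1) b'(1) a(2) b'(2)] by auto
qed

lemma up2: assumes a: "a \<in> P" "r a = i"
  shows "\<exists>b\<in>P. \<exists>b'\<in>P. r b = Suc i \<and> r b' = Suc i \<and> b \<noteq> b' \<and> lt a b \<and> lt a b'"
proof -
  obtain c c' where cc: "c \<in> {3,4,5}" "c' \<in> {3,4,5}" "c \<noteq> c'" "crown6_lt (h a) c" "crown6_lt (h a) c'"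
    using c_up2[OF hlo[OF a]] by blast
  obtain b where b: "b \<in> P" "r b = Suc i" "h b = c" using prehi[OF cc(1)] by blast
  obtain b' where b': "b' \<in> P" "r b' = Suc i" "h b' = c'" using prehi[OF cc(2)] by blast
  show ?thesis using b b' cc ltiff[OF a(1) b(1) a(2) b(2)] ltiff[OF a(1) b'(1) a(2) b'(2)] by auto
qed

lemma up1: assumes a: "a \<in> P" "r a = i" and b: "b \<in> P" "b' \<in> P" "r b = Suc i" "r b' = Suc i" "b \<noteq> b'"
  and n: "\<not> lt a b" "\<not> lt a b'" shows False
proof -
  have "h b \<noteq> h b'" using hinj b by auto
  thus False using c_up1[OF hlo[OF a] hhi[OF b(1) b(3)] hhi[OF b(2) b(4)]] n
      ltiff[OF a(1) b(1) a(2) b(3)] ltiff[OF a(1) b(2) a(2) b(4)] by auto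
qed

lemma upn: assumes a: "a \<in> P" "r a = i" shows "\<exists>b\<in>P. r b = Suc i \<and> \<not> lt a b"
proof -
  obtain c where c: "c \<in> {3,4,5}" "\<not> crown6_lt (h a) c" using c_upn[OF hlo[OF a]] by blast
  obtain b where b: "b \<in> P" "r b = Suc i" "h b = c" using prehi[OF c(1)] by blast
  show ?thesis using b c ltiff[OF a(1) b(1) a(2) b(2)] by auto
qed

lemma upc: assumes a: "a \<in> P" "r a = i" and a': "a' \<in> P" "r a' = i" and ne: "a \<noteq> a'"
  shows "\<exists>b\<in>P. r b = Suc i \<and> lt a b \<and> lt a' b"
proof -
  have "h a \<noteq> h a'" using hinj a a' ne by auto
  then obtain c where c: "c \<in> {3,4,5}" "crown6_lt (h a) c" "crown6_lt (h a') c"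
    using c_upc[OF hlo[OF a] hlo[OF a']] by blast
  obtain b where b: "b \<in> P" "r b = Suc i" "h b = c" using prehi[OF c(1)] by blast
  show ?thesis using b c ltiff[OF a(1) b(1) a(2) b(2)] ltiff[OF a'(1) b(1) a'(2) b(2)] by auto
qed

lemma hne: "x \<in> P \<Longrightarrow> y \<in> P \<Longrightarrow> r x = i \<or> r x = Suc i \<Longrightarrow> r y = i \<or> r y = Suc i \<Longrightarrow> x \<noteq> y \<Longrightarrow> h x \<noteq> h y"
  using hinj by blast

lemma four_lo: assumes "a \<in> P" "b \<in> P" "c \<in> P" "d \<in> P" "r a = i" "r b = i" "r c = i" "r d = i"
  and "distinct [a,b,c,d]" shows False
proof -
  have "distinct [h a, h b, h c, h d]" using assms(9) hne[OF assms(1) assms(2)] hne[OF assms(1) assms(3)] hne[OF assms(1) assms(4)]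
    hne[OF assms(2) assms(3)] hne[OF assms(2) assms(4)] hne[OF assms(3) assms(4)] assms(5-8) by simp
  thus False using c_four_lo[OF hlo[OF assms(1,5)] hlo[OF assms(2,6)] hlo[OF assms(3,7)] hlo[OF assms(4,8)]] by blast
qed

lemma four_hi: assumes "a \<in> P" "b \<in> P" "c \<in> P" "d \<in> P" "r a = Suc i" "r b = Suc i" "r c = Suc i" "r d = Suc i"
  and "distinct [a,b,c,d]" shows False
proof -
  have "distinct [h a, h b, h c, h d]" using assms(9) hne[OF assms(1) assms(2)] hne[OF assms(1) assms(3)] hne[OF assms(1) assms(4)]
    hne[OF assms(2) assms(3)] hne[OF assms(2) assms(4)] hne[OF assms(3) assms(4)] assms(5-8) by simp
  thus False using c_four_hi[OF hhi[OF assms(1,5)] hhi[OF assms(2,6)] hhi[OF assms(3,7)] hhi[OF assms(4,8)]] by blast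
qed

lemma ne_lo: "\<exists>x\<in>P. r x = i" using prelo[of 0] by auto
lemma ne_hi: "\<exists>x\<in>P. r x = Suc i" using prehi[of 3] by auto

end

definition inc :: "('a \<Rightarrow> 'a \<Rightarrow> bool) \<Rightarrow> 'a \<Rightarrow> 'a \<Rightarrow> bool" where
  "inc lt x y \<longleftrightarrow> \<not> lt x y \<and> \<not> lt y x"

lemma inc_sym: "inc lt x y \<longleftrightarrow> inc lt y x" unfolding inc_def by blast

lemma inc_dual: "inc (\<lambda>x y. lt y x) x y \<longleftrightarrow> inc lt x y" unfolding inc_def by blast

locale stk =
  fixes P :: "'a set" and lt :: "'a \<Rightarrow> 'a \<Rightarrow> bool" and r :: "'a \<Rightarrow> nat" and n :: nat
  assumes irr: "x \<in> P \<Longrightarrow> \<not> lt x x"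
    and trans: "x \<in> P \<Longrightarrow> y \<in> P \<Longrightarrow> z \<in> P \<Longrightarrow> lt x y \<Longrightarrow> lt y z \<Longrightarrow> lt x z"
    and mono_r: "x \<in> P \<Longrightarrow> y \<in> P \<Longrightarrow> lt x y \<Longrightarrow> r x < r y"
    and bound: "x \<in> P \<Longrightarrow> r x \<le> n"
    and nonempty: "k \<le> n \<Longrightarrow> \<exists>x\<in>P. r x = k"
    and four: "a \<in> P \<Longrightarrow> b \<in> P \<Longrightarrow> c \<in> P \<Longrightarrow> d \<in> P \<Longrightarrow> r b = r a \<Longrightarrow> r c = r a \<Longrightarrow> r d = r a
       \<Longrightarrow> distinct [a,b,c,d] \<Longrightarrow> False"
    and dn2: "b \<in> P \<Longrightarrow> r b = Suc k \<Longrightarrow> \<exists>a\<in>P. \<exists>a'\<in>P. r a = k \<and> r a' = k \<and> a \<noteq> a' \<and> lt a b \<and> lt a' b"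
    and dn1: "b \<in> P \<Longrightarrow> r b = Suc k \<Longrightarrow> a \<in> P \<Longrightarrow> a' \<in> P \<Longrightarrow> r a = k \<Longrightarrow> r a' = k \<Longrightarrow> a \<noteq> a'
       \<Longrightarrow> \<not> lt a b \<Longrightarrow> \<not> lt a' b \<Longrightarrow> False"
    and dnn: "b \<in> P \<Longrightarrow> r b = Suc k \<Longrightarrow> \<exists>a\<in>P. r a = k \<and> \<not> lt a b"
    and dnc: "b \<in> P \<Longrightarrow> b' \<in> P \<Longrightarrow> r b = Suc k \<Longrightarrow> r b' = Suc k \<Longrightarrow> b \<noteq> b' \<Longrightarrow> \<exists>a\<in>P. r a = k \<and> lt a b \<and> lt a b'"
    and up2: "a \<in> P \<Longrightarrow> r a = k \<Longrightarrow> k < n \<Longrightarrow> \<exists>b\<in>P. \<exists>b'\<in>P. r b = Suc k \<and> r b' = Suc k \<and> b \<noteq> b' \<and> lt a b \<and> lt a b'"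
    and up1: "a \<in> P \<Longrightarrow> r a = k \<Longrightarrow> b \<in> P \<Longrightarrow> b' \<in> P \<Longrightarrow> r b = Suc k \<Longrightarrow> r b' = Suc k \<Longrightarrow> b \<noteq> b'
       \<Longrightarrow> \<not> lt a b \<Longrightarrow> \<not> lt a b' \<Longrightarrow> False"
    and upn: "a \<in> P \<Longrightarrow> r a = k \<Longrightarrow> k < n \<Longrightarrow> \<exists>b\<in>P. r b = Suc k \<and> \<not> lt a b"
    and upc: "a \<in> P \<Longrightarrow> a' \<in> P \<Longrightarrow> r a = k \<Longrightarrow> r a' = k \<Longrightarrow> a \<noteq> a' \<Longrightarrow> k < n \<Longrightarrow> \<exists>b\<in>P. r b = Suc k \<and> lt a b \<and> lt a' b"
begin

lemma far_aux: "x \<in> P \<Longrightarrow> \<forall>y\<in>P. r y = r x + 2 + d \<longrightarrow> lt x y"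
proof (induction d)
  case 0
  show ?case
  proof (intro ballI impI)
    fix y assume y: "y \<in> P" "r y = r x + 2 + 0"
    have "r x < n" using bound[OF y(1)] y(2) by simp
    then obtain b b' where bb: "b \<in> P" "b' \<in> P" "r b = Suc (r x)" "r b' = Suc (r x)" "b \<noteq> b'" "lt x b" "lt x b'"
      using up2[OF 0 refl] by blast
    have ry: "r y = Suc (Suc (r x))" using y(2) by simp
    have "lt b y \<or> lt b' y" using dn1[OF y(1) ry bb(1) bb(2) bb(3) bb(4) bb(5)] by blast
    thus "lt x y" using trans[OF 0 bb(1) y(1) bb(6)] trans[OF 0 bb(2) y(1) bb(7)] by blast
  qed
next
  case (Suc d)
  show ?case
  proof (intro ballI impI)
    fix y assume y: "y \<in> P" "r y = r x + 2 + Suc d"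
    have ry: "r y = Suc (r x + 2 + d)" using y(2) by simp
    obtain a where a: "a \<in> P" "r a = r x + 2 + d" "lt a y" using dn2[OF y(1) ry] by blast
    have "lt x a" using Suc.IH Suc.prems a by blast
    thus "lt x y" using trans[OF Suc.prems a(1) y(1)] a(3) by blast
  qed
qed

lemma far: "x \<in> P \<Longrightarrow> y \<in> P \<Longrightarrow> r x + 2 \<le> r y \<Longrightarrow> lt x y"
proof -
  assume a: "x \<in> P" "y \<in> P" "r x + 2 \<le> r y"
  then obtain d where "r y = r x + 2 + d" using le_Suc_ex by blast
  thus "lt x y" using far_aux[OF a(1)] a(2) by blast
qed

lemma inc_close: "x \<in> P \<Longrightarrow> y \<in> P \<Longrightarrow> inc lt x y \<Longrightarrow> r x \<le> Suc (r y) \<and> r y \<le> Suc (r x)"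
  using far unfolding inc_def by (metis add_2_eq_Suc' not_less_eq_eq)

lemma h1: "a \<in> P \<Longrightarrow> a' \<in> P \<Longrightarrow> b \<in> P \<Longrightarrow> r a' = r a \<Longrightarrow> r b = Suc (r a) \<Longrightarrow> a \<noteq> a'
  \<Longrightarrow> inc lt a b \<Longrightarrow> inc lt a' b \<Longrightarrow> False"
  using dn1[of b "r a" a a'] unfolding inc_def by metis

lemma h2: "a \<in> P \<Longrightarrow> b \<in> P \<Longrightarrow> b' \<in> P \<Longrightarrow> r b = Suc (r a) \<Longrightarrow> r b' = Suc (r a) \<Longrightarrow> b \<noteq> b'
  \<Longrightarrow> inc lt a b \<Longrightarrow> inc lt a b' \<Longrightarrow> False"
  using up1[of a "r a" b b'] unfolding inc_def by metis

lemma anti3: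
  assumes P: "u \<in> P" "v \<in> P" "w \<in> P" and d: "u \<noteq> v" "u \<noteq> w" "v \<noteq> w"
    and i: "inc lt u v" "inc lt u w" "inc lt v w"
  shows "r v = r u \<and> r w = r u"
proof -
  have i': "inc lt v u" "inc lt w u" "inc lt w v" using i inc_sym by metis+
  have c1: "r u \<le> Suc (r v) \<and> r v \<le> Suc (r u)" using inc_close P i by blast
  have c2: "r u \<le> Suc (r w) \<and> r w \<le> Suc (r u)" using inc_close P i by blast
  have c3: "r v \<le> Suc (r w) \<and> r w \<le> Suc (r v)" using inc_close P i by blast
  consider "r v = r u" | "r v = Suc (r u)" | "r u = Suc (r v)" using c1 by linarith
  thus ?thesis
  proof cases
    case 1
    consider "r w = r u" | "r w = Suc (r u)" | "r u = Suc (r w)" using c2 by linarith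
    thus ?thesis
    proof cases
      case 1 thus ?thesis using \<open>r v = r u\<close> by simp
    next
      case 2 thus ?thesis using h1[OF P(1) P(2) P(3) \<open>r v = r u\<close> 2 d(1) i(2) i(3)] by simp
    next
      case 3 thus ?thesis using h2[OF P(3) P(1) P(2) 3 _ d(1) i'(2) i'(3)] \<open>r v = r u\<close> by simp
    qed
  next
    case 2
    consider "r w = r u" | "r w = r v" using c2 c3 2 by linarith
    thus ?thesis
    proof cases
      case 1 thus ?thesis using h1[OF P(1) P(3) P(2) 1 \<open>r v = Suc (r u)\<close> d(2) i(1) i'(3)] by simp
    next
      case a: 2 thus ?thesis using h2[OF P(1) P(2) P(3) \<open>r v = Suc (r u)\<close> _ d(3) i(1) i(2)] 2 by simp
    qed
  next
    case 3
    consider "r w = r v" | "r w = r u" using c2 c3 3 by linarith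
    thus ?thesis
    proof cases
      case 1 thus ?thesis using h1[OF P(2) P(3) P(1) 1 \<open>r u = Suc (r v)\<close> d(3) i'(1) i'(2)] by simp
    next
      case a: 2 thus ?thesis using h2[OF P(2) P(1) P(3) \<open>r u = Suc (r v)\<close> _ d(2) i'(1) i(3)] 3 by simp
    qed
  qed
qed

end

context stk
begin

lemma step_up:
  assumes QP: "Q \<subseteq> P" and fQ: "\<forall>x\<in>P. f x \<in> Q"
    and fm: "\<forall>x\<in>P. \<forall>y\<in>P. lt x y \<longrightarrow> f x = f y \<or> lt (f x) (f y)"
    and ffix: "\<forall>q\<in>Q. f q = q"
    and T1: "\<forall>x\<in>Q. \<exists>y\<in>Q. y \<noteq> x \<and> inc lt x y"
    and T2: "\<forall>x\<in>Q. \<forall>y\<in>Q. \<forall>z\<in>Q. \<forall>w\<in>Q. distinct [x,y,z] \<and> inc lt x y \<and> inc lt x z \<and> inc lt y z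
               \<and> w \<noteq> x \<and> inc lt x w \<longrightarrow> (\<exists>u\<in>Q. \<exists>v\<in>Q. distinct [w,u,v] \<and> inc lt w u \<and> inc lt w v \<and> inc lt u v)"
    and Lt: "\<forall>x\<in>P. r x = t \<longrightarrow> x \<in> Q" and tn: "t < n"
  shows "\<forall>x\<in>P. r x = Suc t \<longrightarrow> x \<in> Q"
proof -
  have fP: "\<And>x. x \<in> P \<Longrightarrow> f x \<in> P" using fQ QP by blast
  have fm': "\<And>x y. x \<in> P \<Longrightarrow> y \<in> P \<Longrightarrow> lt x y \<Longrightarrow> f x = f y \<or> lt (f x) (f y)" using fm by blast
  have fix': "\<And>q. q \<in> Q \<Longrightarrow> f q = q" using ffix by blast
  obtain y0 where y0: "y0 \<in> P" "r y0 = Suc t" using nonempty[of "Suc t"] tn by auto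
  have ex: "\<exists>y\<in>Q. r y = Suc t"
  proof (rule ccontr)
    assume none: "\<not> (\<exists>y\<in>Q. r y = Suc t)"
    have above: "t < r (f x)" if x: "x \<in> P" "t < r x" for x
    proof -
      obtain b b' where bb: "b \<in> P" "b' \<in> P" "r b = t" "r b' = t" "b \<noteq> b'" "lt b x" "lt b' x"
      proof (cases "r x = Suc t")
        case True thus ?thesis using dn2[OF x(1) True] that by blast
      next
        case False
        obtain b b' where bb: "b \<in> P" "b' \<in> P" "r b = t" "r b' = t" "b \<noteq> b'"
          using dn2[OF y0] by blast
        have "lt b x" "lt b' x" using far[OF bb(1) x(1)] far[OF bb(2) x(1)] bb False x(2) by auto
        thus ?thesis using that bb by blast
      qed
      have fb: "f b = b" "f b' = b'" using fix' Lt bb by auto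
      have o1: "b = f x \<or> lt b (f x)" using fm'[OF bb(1) x(1) bb(6)] fb by simp
      have o2: "b' = f x \<or> lt b' (f x)" using fm'[OF bb(2) x(1) bb(7)] fb by simp
      have "lt b (f x)"
      proof (rule ccontr)
        assume "\<not> lt b (f x)"
        hence "f x = b" using o1 by simp
        hence "lt b' b" using o2 bb(5) by auto
        thus False using mono_r[OF bb(2) bb(1)] bb by simp
      qed
      thus ?thesis using mono_r[OF bb(1) fP[OF x(1)]] bb(3) by simp
    qed
    have "\<exists>p. (p \<in> Q \<and> t < r p) \<and> (\<forall>q. (q \<in> Q \<and> t < r q) \<longrightarrow> r p \<le> r q)"
      using ex_has_least_nat[of "\<lambda>p. p \<in> Q \<and> t < r p" "f y0" r] fQ y0 above[OF y0(1)] by simp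
    then obtain p where p: "p \<in> Q" "t < r p" and pmin: "\<And>q. q \<in> Q \<Longrightarrow> t < r q \<Longrightarrow> r p \<le> r q" by blast
    define m where "m = r p"
    have pP: "p \<in> P" using p QP by blast
    have mn: "m \<le> n" using bound[OF pP] m_def by simp
    have mt: "Suc (Suc t) \<le> m" using p none m_def by (metis Suc_leI le_neq_implies_less not_less_eq_eq)
    then obtain m1 where m1: "m = Suc m1" by (cases m) auto
    have m1t: "t < m1" using mt m1 by simp
    have rp: "r p = Suc m1" using m_def m1 by simp
    have hfx: "m \<le> r (f x)" if "x \<in> P" "t < r x" for x
      using pmin[OF fQ[rule_format, OF that(1)] above[OF that]] m_def by simp
    have eqp: "f x = p'" if x: "x \<in> P" "r x = m1" and p': "p' \<in> Q" "r p' = m" "lt x p'" for x p'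
    proof -
      have p'P: "p' \<in> P" using p' QP by blast
      have "f x = p' \<or> lt (f x) p'" using fm'[OF x(1) p'P p'(3)] fix'[OF p'(1)] by simp
      moreover have "\<not> lt (f x) p'"
      proof
        assume "lt (f x) p'"
        hence "r (f x) < m" using mono_r[OF fP[OF x(1)] p'P] p'(2) by simp
        thus False using hfx[OF x(1)] x(2) m1t by simp
      qed
      ultimately show ?thesis by simp
    qed
    have uniq: "p' = p" if p'Q: "p' \<in> Q" and rp': "r p' = m" for p'
    proof (rule ccontr)
      assume ne: "p' \<noteq> p"
      have p'P: "p' \<in> P" using p'Q QP by blast
      obtain x where x: "x \<in> P" "r x = m1" "lt x p" "lt x p'"
        using dnc[OF pP p'P _ _ ne[symmetric], of m1] m1 m_def rp' by auto
      have "f x = p" using eqp[OF x(1) x(2) p(1) m_def[symmetric] x(3)] .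
      moreover have "f x = p'" using eqp[OF x(1) x(2) p'Q rp' x(4)] .
      ultimately show False using ne by simp
    qed
    obtain q where q: "q \<in> Q" "q \<noteq> p" "inc lt p q" using T1 p(1) by blast
    have qP: "q \<in> P" using q QP by blast
    have rq: "r q = Suc m"
    proof -
      have "\<not> r q + 2 \<le> m" using far[OF qP pP] q(3) m_def unfolding inc_def by auto
      hence "t < r q" using mt by linarith
      hence "m \<le> r q" using pmin[OF q(1)] m_def by simp
      moreover have "r q \<noteq> m" using uniq[OF q(1)] q(2) by auto
      moreover have "\<not> m + 2 \<le> r q" using far[OF pP qP] q(3) m_def unfolding inc_def by auto
      ultimately show ?thesis by linarith
    qed
    have qn: "Suc m \<le> n" using bound[OF qP] rq by simp
    obtain x0 where x0: "x0 \<in> P" "r x0 = m1" "\<not> lt x0 p" using dnn[OF pP rp] by blast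
    have lx0q: "lt x0 q" using far[OF x0(1) qP] x0(2) rq m1 by simp
    have fx0: "f x0 = q"
    proof -
      have "f x0 = q \<or> lt (f x0) q" using fm'[OF x0(1) qP lx0q] fix'[OF q(1)] by simp
      moreover have "\<not> lt (f x0) q"
      proof
        assume l: "lt (f x0) q"
        hence "r (f x0) < Suc m" using mono_r[OF fP[OF x0(1)] qP] rq by simp
        moreover have "m \<le> r (f x0)" using hfx[OF x0(1)] x0(2) m1t by simp
        ultimately have "r (f x0) = m" by simp
        hence "f x0 = p" using uniq fQ x0(1) by blast
        thus False using l q(3) unfolding inc_def by simp
      qed
      ultimately show ?thesis by simp
    qed
    obtain u where u: "u \<in> P" "r u = m" "lt x0 u"
      using up2[OF x0(1) x0(2)] m1 mn by auto
    have up: "u \<noteq> p" using u(3) x0(3) by auto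
    have luq: "lt u q"
    proof (rule ccontr)
      assume "\<not> lt u q"
      moreover have "\<not> lt p q" using q(3) unfolding inc_def by simp
      ultimately show False using dn1[OF qP rq pP u(1) m_def[symmetric] u(2) up[symmetric]] by simp
    qed
    obtain x1 where x1: "x1 \<in> P" "r x1 = m1" "lt x1 u" "lt x1 p"
      using dnc[OF u(1) pP _ _ up, of m1] u(2) m_def m1 by auto
    have fx1: "f x1 = p" using eqp[OF x1(1) x1(2) p(1) m_def[symmetric] x1(4)] .
    have fuP: "f u \<in> P" using fP[OF u(1)] .
    have o1: "q = f u \<or> lt q (f u)" using fm'[OF x0(1) u(1) u(3)] fx0 by simp
    have o2: "f u = q \<or> lt (f u) q" using fm'[OF u(1) qP luq] fix'[OF q(1)] by simp
    have o3: "p = f u \<or> lt p (f u)" using fm'[OF x1(1) u(1) x1(3)] fx1 by simp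
    show False
    proof (cases "f u = q")
      case True
      thus False using o3 q(2) q(3) unfolding inc_def by auto
    next
      case False
      hence "lt q (f u)" "lt (f u) q" using o1 o2 by auto
      thus False using trans[OF qP fuP qP] irr[OF qP] by blast
    qed
  qed
  then obtain y where y: "y \<in> Q" "r y = Suc t" by blast
  have yP: "y \<in> P" using y QP by blast
  obtain a where a: "a \<in> P" "r a = t" "\<not> lt a y" using dnn[OF yP y(2)] by blast
  obtain a1 a2 where aa: "a1 \<in> P" "a2 \<in> P" "r a1 = t" "r a2 = t" "a1 \<noteq> a2" "lt a1 y" "lt a2 y"
    using dn2[OF yP y(2)] by blast
  have aQ: "a \<in> Q" "a1 \<in> Q" "a2 \<in> Q" using Lt a aa by auto
  have nolt: "\<not> lt c d" if "c \<in> P" "d \<in> P" "r c = r d" for c d using mono_r[OF that(1,2)] that(3) by auto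
  have d3: "distinct [a, a1, a2]" using a aa by auto
  have i1: "inc lt a a1" "inc lt a a2" "inc lt a1 a2" unfolding inc_def using nolt a aa by auto
  have i2: "inc lt a y" unfolding inc_def using a(3) mono_r[OF yP a(1)] a(2) y(2) by auto
  have ya: "y \<noteq> a" using a(2) y(2) by auto
  obtain u v where uv: "u \<in> Q" "v \<in> Q" "distinct [y,u,v]" "inc lt y u" "inc lt y v" "inc lt u v"
    using T2[rule_format, OF aQ(1) aQ(2) aQ(3) y(1)] d3 i1 i2 ya by blast
  have uvP: "u \<in> P" "v \<in> P" using uv QP by auto
  have ruv: "r u = r y" "r v = r y" using anti3[OF yP uvP] uv by auto
  show ?thesis
  proof (intro ballI impI)
    fix e assume e: "e \<in> P" "r e = Suc t"
    show "e \<in> Q"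
    proof (rule ccontr)
      assume "e \<notin> Q"
      hence "distinct [y,u,v,e]" using uv y by auto
      thus False using four[OF yP uvP e(1)] ruv e y by simp
    qed
  qed
qed

end

lemma stk_dual:
  assumes "stk P lt r n"
  shows "stk P (\<lambda>x y. lt y x) (\<lambda>x. n - r x) n"
proof -
  interpret s: stk P lt r n by fact
  have b: "\<And>x. x \<in> P \<Longrightarrow> r x \<le> n" by (rule s.bound)
  show ?thesis
  proof (unfold_locales)
    fix x assume "x \<in> P" thus "\<not> lt x x" by (rule s.irr)
  next
    fix x y z assume "x \<in> P" "y \<in> P" "z \<in> P" "lt y x" "lt z y" thus "lt z x" using s.trans by blast
  next
    fix x y assume "x \<in> P" "y \<in> P" "lt y x" thus "n - r x < n - r y" using s.mono_r[of y x] b[of x] by simp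
  next
    fix x assume "x \<in> P" thus "n - r x \<le> n" by simp
  next
    fix k assume k: "k \<le> n"
    obtain x where "x \<in> P" "r x = n - k" using s.nonempty[of "n - k"] by auto
    thus "\<exists>x\<in>P. n - r x = k" using k by (intro bexI[of _ x]) auto
  next
    fix a b c d assume a: "a \<in> P" "b \<in> P" "c \<in> P" "d \<in> P" "n - r b = n - r a" "n - r c = n - r a" "n - r d = n - r a"
      "distinct [a,b,c,d]"
    have "r b = r a" "r c = r a" "r d = r a" using a(5-7) b[OF a(1)] b[OF a(2)] b[OF a(3)] b[OF a(4)] by auto
    thus False using s.four[OF a(1-4)] a(8) by blast
  next
    fix b k assume bk: "b \<in> P" "n - r b = Suc k"
    hence rb: "r b = n - Suc k" "n - Suc k < n" "Suc k \<le> n" using b[OF bk(1)] by auto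
    obtain a a' where aa: "a \<in> P" "a' \<in> P" "r a = Suc (n - Suc k)" "r a' = Suc (n - Suc k)" "a \<noteq> a'" "lt b a" "lt b a'"
      using s.up2[OF bk(1) rb(1) rb(2)] by blast
    show "\<exists>a\<in>P. \<exists>a'\<in>P. n - r a = k \<and> n - r a' = k \<and> a \<noteq> a' \<and> lt b a \<and> lt b a'"
      using aa rb by (intro bexI[of _ a] bexI[of _ a']) auto
  next
    fix b k a a' assume h: "b \<in> P" "n - r b = Suc k" "a \<in> P" "a' \<in> P" "n - r a = k" "n - r a' = k" "a \<noteq> a'"
      "\<not> lt b a" "\<not> lt b a'"
    have "r a = Suc (r b)" "r a' = Suc (r b)" using h b[OF h(1)] b[OF h(3)] b[OF h(4)] by auto
    thus False using s.up1[OF h(1) refl h(3) h(4) _ _ h(7) h(8) h(9)] by blast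
  next
    fix b k assume bk: "b \<in> P" "n - r b = Suc k"
    hence rb: "r b = n - Suc k" "n - Suc k < n" "Suc k \<le> n" using b[OF bk(1)] by auto
    obtain a where a: "a \<in> P" "r a = Suc (n - Suc k)" "\<not> lt b a" using s.upn[OF bk(1) rb(1) rb(2)] by blast
    show "\<exists>a\<in>P. n - r a = k \<and> \<not> lt b a" using a rb by (intro bexI[of _ a]) auto
  next
    fix b b' k assume h: "b \<in> P" "b' \<in> P" "n - r b = Suc k" "n - r b' = Suc k" "b \<noteq> b'"
    hence rb: "r b = n - Suc k" "r b' = n - Suc k" "n - Suc k < n" "Suc k \<le> n" using b[OF h(1)] b[OF h(2)] by auto
    obtain a where a: "a \<in> P" "r a = Suc (n - Suc k)" "lt b a" "lt b' a" using s.upc[OF h(1) h(2) rb(1) rb(2) h(5) rb(3)] by blast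
    show "\<exists>a\<in>P. n - r a = k \<and> lt b a \<and> lt b' a" using a rb by (intro bexI[of _ a]) auto
  next
    fix a k assume h: "a \<in> P" "n - r a = k" "k < n"
    hence ra: "r a = Suc (n - Suc k)" using b[OF h(1)] by auto
    obtain c c' where cc: "c \<in> P" "c' \<in> P" "r c = n - Suc k" "r c' = n - Suc k" "c \<noteq> c'" "lt c a" "lt c' a"
      using s.dn2[OF h(1) ra] by blast
    show "\<exists>b\<in>P. \<exists>b'\<in>P. n - r b = Suc k \<and> n - r b' = Suc k \<and> b \<noteq> b' \<and> lt b a \<and> lt b' a"
      using cc h(3) by (intro bexI[of _ c] bexI[of _ c']) auto
  next
    fix a k c c' assume h: "a \<in> P" "n - r a = k" "c \<in> P" "c' \<in> P" "n - r c = Suc k" "n - r c' = Suc k" "c \<noteq> c'"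
      "\<not> lt c a" "\<not> lt c' a"
    have "r a = Suc (r c)" "r a = Suc (r c')" using h b[OF h(1)] b[OF h(3)] b[OF h(4)] by auto
    thus False using s.dn1[OF h(1) _ h(3) h(4) _ _ h(7) h(8) h(9)] by (metis Suc_inject)
  next
    fix a k assume h: "a \<in> P" "n - r a = k" "k < n"
    hence ra: "r a = Suc (n - Suc k)" using b[OF h(1)] by auto
    obtain c where c: "c \<in> P" "r c = n - Suc k" "\<not> lt c a" using s.dnn[OF h(1) ra] by blast
    show "\<exists>b\<in>P. n - r b = Suc k \<and> \<not> lt b a" using c h(3) by (intro bexI[of _ c]) auto
  next
    fix a a' k assume h: "a \<in> P" "a' \<in> P" "n - r a = k" "n - r a' = k" "a \<noteq> a'" "k < n"
    hence ra: "r a = Suc (n - Suc k)" "r a' = Suc (n - Suc k)" using b[OF h(1)] b[OF h(2)] by auto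
    obtain c where c: "c \<in> P" "r c = n - Suc k" "lt c a" "lt c a'" using s.dnc[OF h(1) h(2) ra h(5)] by blast
    show "\<exists>b\<in>P. n - r b = Suc k \<and> lt b a \<and> lt b a'" using c h(6) by (intro bexI[of _ c]) auto
  qed
qed

lemma six_stk:
  assumes fp: "fin_poset P lt" and ro: "ranked_of_rank P lt n" and n1: "1 \<le> n"
    and cr: "\<forall>i<n. order_iso (levels P lt i (i+1)) lt crown6 crown6_lt"
  shows "stk P lt (rank P lt) n"
proof -
  have CL: "\<exists>h. crown_lv P lt k h" if k: "k < n" for k
  proof -
    obtain h where h: "bij_betw h (levels P lt k (Suc k)) crown6"
      "\<forall>x\<in>levels P lt k (Suc k). \<forall>y\<in>levels P lt k (Suc k). lt x y \<longleftrightarrow> crown6_lt (h x) (h y)"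
      using cr k unfolding order_iso_def by auto
    have "crown_lv P lt k h" unfolding crown_lv_def using fp h by blast
    thus ?thesis by blast
  qed
  have sp: "strict_poset P lt" using fp by (rule fp_sp)
  have bnd: "\<And>x. x \<in> P \<Longrightarrow> rank P lt x \<le> n" using rank_le_n[OF fp ro] by blast
  show ?thesis
  proof (unfold_locales)
    fix x assume "x \<in> P" thus "\<not> lt x x" using sp_irr[OF sp] by blast
  next
    fix x y z assume "x \<in> P" "y \<in> P" "z \<in> P" "lt x y" "lt y z" thus "lt x z" using sp_trans[OF sp] by blast
  next
    fix x y assume "x \<in> P" "y \<in> P" "lt x y" thus "rank P lt x < rank P lt y" using rank_mono[OF fp] by blast
  next
    fix x assume "x \<in> P" thus "rank P lt x \<le> n" by (rule bnd)
  next
    fix k assume k: "k \<le> n"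
    show "\<exists>x\<in>P. rank P lt x = k"
    proof (cases "k < n")
      case True
      then obtain h where "crown_lv P lt k h" using CL by blast
      thus ?thesis using crown_lv.ne_lo by blast
    next
      case False
      hence kk: "k = Suc (n - 1)" "n - 1 < n" using k n1 by auto
      then obtain h where "crown_lv P lt (n - 1) h" using CL by blast
      thus ?thesis using crown_lv.ne_hi kk by metis
    qed
  next
    fix a b c d assume h: "a \<in> P" "b \<in> P" "c \<in> P" "d \<in> P" "rank P lt b = rank P lt a"
      "rank P lt c = rank P lt a" "rank P lt d = rank P lt a" "distinct [a,b,c,d]"
    show False
    proof (cases "rank P lt a < n")
      case True
      then obtain g where g: "crown_lv P lt (rank P lt a) g" using CL by blast
      show False using crown_lv.four_lo[OF g h(1-4) refl h(5-8)] .
    next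
      case False
      hence kk: "rank P lt a = Suc (n - 1)" "n - 1 < n" using bnd[OF h(1)] n1 by auto
      then obtain g where g: "crown_lv P lt (n - 1) g" using CL by blast
      show False using crown_lv.four_hi[OF g h(1-4) kk(1)] h(5-8) kk(1) by simp
    qed
  next
    fix b k assume h: "b \<in> P" "rank P lt b = Suc k"
    hence "k < n" using bnd[OF h(1)] by simp
    then obtain g where g: "crown_lv P lt k g" using CL by blast
    show "\<exists>a\<in>P. \<exists>a'\<in>P. rank P lt a = k \<and> rank P lt a' = k \<and> a \<noteq> a' \<and> lt a b \<and> lt a' b"
      using crown_lv.dn2[OF g h] .
  next
    fix b k a a' assume h: "b \<in> P" "rank P lt b = Suc k" "a \<in> P" "a' \<in> P" "rank P lt a = k" "rank P lt a' = k"
      "a \<noteq> a'" "\<not> lt a b" "\<not> lt a' b"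
    hence "k < n" using bnd[OF h(1)] by simp
    then obtain g where g: "crown_lv P lt k g" using CL by blast
    show False using crown_lv.dn1[OF g h] .
  next
    fix b k assume h: "b \<in> P" "rank P lt b = Suc k"
    hence "k < n" using bnd[OF h(1)] by simp
    then obtain g where g: "crown_lv P lt k g" using CL by blast
    show "\<exists>a\<in>P. rank P lt a = k \<and> \<not> lt a b" using crown_lv.dnn[OF g h] .
  next
    fix b b' k assume h: "b \<in> P" "b' \<in> P" "rank P lt b = Suc k" "rank P lt b' = Suc k" "b \<noteq> b'"
    hence "k < n" using bnd[OF h(1)] by simp
    then obtain g where g: "crown_lv P lt k g" using CL by blast
    show "\<exists>a\<in>P. rank P lt a = k \<and> lt a b \<and> lt a b'" using crown_lv.dnc[OF g h(1) h(3) h(2) h(4) h(5)] .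
  next
    fix a k assume h: "a \<in> P" "rank P lt a = k" "k < n"
    then obtain g where g: "crown_lv P lt k g" using CL by blast
    show "\<exists>b\<in>P. \<exists>b'\<in>P. rank P lt b = Suc k \<and> rank P lt b' = Suc k \<and> b \<noteq> b' \<and> lt a b \<and> lt a b'"
      using crown_lv.up2[OF g h(1,2)] .
  next
    fix a k b b' assume h: "a \<in> P" "rank P lt a = k" "b \<in> P" "b' \<in> P" "rank P lt b = Suc k" "rank P lt b' = Suc k"
      "b \<noteq> b'" "\<not> lt a b" "\<not> lt a b'"
    hence "k < n" using bnd[OF h(3)] by simp
    then obtain g where g: "crown_lv P lt k g" using CL by blast
    show False using crown_lv.up1[OF g h] .
  next
    fix a k assume h: "a \<in> P" "rank P lt a = k" "k < n"
    then obtain g where g: "crown_lv P lt k g" using CL by blast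
    show "\<exists>b\<in>P. rank P lt b = Suc k \<and> \<not> lt a b" using crown_lv.upn[OF g h(1,2)] .
  next
    fix a a' k assume h: "a \<in> P" "a' \<in> P" "rank P lt a = k" "rank P lt a' = k" "a \<noteq> a'" "k < n"
    then obtain g where g: "crown_lv P lt k g" using CL by blast
    show "\<exists>b\<in>P. rank P lt b = Suc k \<and> lt a b \<and> lt a' b" using crown_lv.upc[OF g h(1,3,2,4,5)] .
  qed
qed

lemma sec_partner:
  assumes sec: "is_section S R" and s: "s \<in> S"
  shows "\<exists>s'\<in>S. s' \<noteq> s \<and> \<not> R s s' \<and> \<not> R s' s"
  using sec unfolding is_section_def
proof (elim disjE conjE exE)
  assume c2: "card S = 2" and an: "\<forall>x\<in>S. \<forall>y\<in>S. \<not> R x y"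
  obtain x y where xy: "S = {x, y}" "x \<noteq> y" using c2 card_2_iff by metis
  show ?thesis
  proof (cases "s = x")
    case True thus ?thesis using xy an by auto
  next
    case False thus ?thesis using xy an s by auto
  qed
next
  fix N assume N: "1 \<le> N" "S = {0..2} \<times> {0..N}" and c2: "\<forall>k\<le>N. \<forall>i\<le>2. \<forall>j\<le>2. \<not> R (i, k) (j, k)"
  obtain i k where ik: "s = (i, k)" "i \<le> 2" "k \<le> N" using s N by auto
  have "((i + 1) mod 3, k) \<in> S" using N ik by auto
  moreover have "(i + 1) mod 3 \<noteq> i" using ik(2) by presburger
  hence "((i + 1) mod 3, k) \<noteq> s" using ik(1) by auto
  moreover have "(i + 1) mod 3 \<le> 2" by simp
  ultimately show ?thesis using c2 ik by blast
qed

lemma sec_row: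
  assumes sec: "is_section S R" and abc: "a \<in> S" "b \<in> S" "c \<in> S" "distinct [a,b,c]" and w: "w \<in> S"
  shows "\<exists>u\<in>S. \<exists>v\<in>S. distinct [w,u,v] \<and> \<not> R w u \<and> \<not> R u w \<and> \<not> R w v \<and> \<not> R v w \<and> \<not> R u v \<and> \<not> R v u"
  using sec unfolding is_section_def
proof (elim disjE conjE exE)
  assume c2: "card S = 2"
  have "finite S" using c2 card.infinite by fastforce
  hence "card {a,b,c} \<le> card S" using abc by (intro card_mono) auto
  moreover have "card {a,b,c} = 3" using abc by simp
  ultimately show ?thesis using c2 by simp
next
  fix N assume N: "1 \<le> N" "S = {0..2} \<times> {0..N}" and c2: "\<forall>k\<le>N. \<forall>i\<le>2. \<forall>j\<le>2. \<not> R (i, k) (j, k)"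
  obtain i k where ik: "w = (i, k)" "i \<le> 2" "k \<le> N" using w N by auto
  have m: "(i + 1) mod 3 \<le> 2" "(i + 2) mod 3 \<le> 2" by simp_all
  have d: "distinct [i, (i + 1) mod 3, (i + 2) mod 3]" using ik(2) by (auto simp: mod_Suc)
  have inS: "((i + 1) mod 3, k) \<in> S" "((i + 2) mod 3, k) \<in> S" using N ik by auto
  show ?thesis
    apply (rule bexI[OF _ inS(1)], rule bexI[OF _ inS(2)])
    using d c2 ik m by auto
qed

lemma tower_T:
  assumes tw: "iso_to_tower_of_sections Q lt"
  shows "\<forall>x\<in>Q. \<exists>y\<in>Q. y \<noteq> x \<and> inc lt x y"
    and "\<forall>x\<in>Q. \<forall>y\<in>Q. \<forall>z\<in>Q. \<forall>w\<in>Q. distinct [x,y,z] \<and> inc lt x y \<and> inc lt x z \<and> inc lt y z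
               \<and> w \<noteq> x \<and> inc lt x w \<longrightarrow> (\<exists>u\<in>Q. \<exists>v\<in>Q. distinct [w,u,v] \<and> inc lt w u \<and> inc lt w v \<and> inc lt u v)"
proof -
  obtain ss g where ss: "\<forall>sec\<in>set ss. is_section (fst sec) (snd sec)"
    and bij: "bij_betw g Q (osum_carrier ss)"
    and iff: "\<forall>x\<in>Q. \<forall>y\<in>Q. lt x y \<longleftrightarrow> osum_lt ss (g x) (g y)"
    using tw unfolding iso_to_tower_of_sections_def order_iso_def by blast
  have memc: "\<And>m s. (m, s) \<in> osum_carrier ss \<longleftrightarrow> m < length ss \<and> s \<in> fst (ss ! m)"
    by (simp add: osum_carrier_def)
  have gin: "\<And>x. x \<in> Q \<Longrightarrow> g x \<in> osum_carrier ss" using bij unfolding bij_betw_def by blast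
  have gsurj: "\<And>c. c \<in> osum_carrier ss \<Longrightarrow> \<exists>x\<in>Q. g x = c" using bij unfolding bij_betw_def by (metis imageE)
  have ginj: "\<And>x y. x \<in> Q \<Longrightarrow> y \<in> Q \<Longrightarrow> g x = g y \<Longrightarrow> x = y" using bij unfolding bij_betw_def inj_on_def by blast
  have incg: "\<And>x y. x \<in> Q \<Longrightarrow> y \<in> Q \<Longrightarrow> inc lt x y \<longleftrightarrow> \<not> osum_lt ss (g x) (g y) \<and> \<not> osum_lt ss (g y) (g x)"
    using iff unfolding inc_def by blast
  have incfst: "\<And>x y. x \<in> Q \<Longrightarrow> y \<in> Q \<Longrightarrow> inc lt x y \<Longrightarrow> fst (g x) = fst (g y)"
    using incg unfolding osum_lt_def by (metis linorder_neqE_nat)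
  have secm: "\<And>m. m < length ss \<Longrightarrow> is_section (fst (ss ! m)) (snd (ss ! m))" using ss by simp
  have lt_same: "\<And>m s s'. osum_lt ss (m, s) (m, s') \<longleftrightarrow> snd (ss ! m) s s'" by (simp add: osum_lt_def)
  show "\<forall>x\<in>Q. \<exists>y\<in>Q. y \<noteq> x \<and> inc lt x y"
  proof
    fix x assume x: "x \<in> Q"
    obtain m s where ms: "g x = (m, s)" by (cases "g x") auto
    have ms2: "m < length ss" "s \<in> fst (ss ! m)" using gin[OF x] ms memc by auto
    obtain s' where s': "s' \<in> fst (ss ! m)" "s' \<noteq> s" "\<not> snd (ss ! m) s s'" "\<not> snd (ss ! m) s' s"
      using sec_partner[OF secm[OF ms2(1)] ms2(2)] by blast
    obtain y where y: "y \<in> Q" "g y = (m, s')" using gsurj[of "(m, s')"] memc ms2 s' by auto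
    have "y \<noteq> x" using y ms s' by auto
    moreover have "inc lt x y" using incg[OF x y(1)] ms y(2) lt_same s' by simp
    ultimately show "\<exists>y\<in>Q. y \<noteq> x \<and> inc lt x y" using y by blast
  qed
  show "\<forall>x\<in>Q. \<forall>y\<in>Q. \<forall>z\<in>Q. \<forall>w\<in>Q. distinct [x,y,z] \<and> inc lt x y \<and> inc lt x z \<and> inc lt y z
               \<and> w \<noteq> x \<and> inc lt x w \<longrightarrow> (\<exists>u\<in>Q. \<exists>v\<in>Q. distinct [w,u,v] \<and> inc lt w u \<and> inc lt w v \<and> inc lt u v)"
  proof (intro ballI impI)
    fix x y z w assume xyzw: "x \<in> Q" "y \<in> Q" "z \<in> Q" "w \<in> Q"
      and h: "distinct [x,y,z] \<and> inc lt x y \<and> inc lt x z \<and> inc lt y z \<and> w \<noteq> x \<and> inc lt x w"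
    obtain m s1 where g1: "g x = (m, s1)" by (cases "g x") auto
    obtain m2 s2 where g2: "g y = (m2, s2)" by (cases "g y") auto
    obtain m3 s3 where g3: "g z = (m3, s3)" by (cases "g z") auto
    obtain m4 s4 where g4: "g w = (m4, s4)" by (cases "g w") auto
    have "m2 = m" "m3 = m" "m4 = m" using incfst[OF xyzw(1) xyzw(2)] incfst[OF xyzw(1) xyzw(3)] incfst[OF xyzw(1) xyzw(4)]
      h g1 g2 g3 g4 by auto
    note eqs = this
    have mem: "m < length ss" "s1 \<in> fst (ss ! m)" "s2 \<in> fst (ss ! m)" "s3 \<in> fst (ss ! m)" "s4 \<in> fst (ss ! m)"
      using gin[OF xyzw(1)] gin[OF xyzw(2)] gin[OF xyzw(3)] gin[OF xyzw(4)] g1 g2 g3 g4 eqs memc by auto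
    have "g x \<noteq> g y" "g x \<noteq> g z" "g y \<noteq> g z" using h ginj xyzw by auto
    hence d: "distinct [s1, s2, s3]" using g1 g2 g3 eqs by auto
    obtain u' v' where uv': "u' \<in> fst (ss ! m)" "v' \<in> fst (ss ! m)" "distinct [s4, u', v']"
      "\<not> snd (ss ! m) s4 u'" "\<not> snd (ss ! m) u' s4" "\<not> snd (ss ! m) s4 v'" "\<not> snd (ss ! m) v' s4"
      "\<not> snd (ss ! m) u' v'" "\<not> snd (ss ! m) v' u'"
      using sec_row[OF secm[OF mem(1)] mem(2) mem(3) mem(4) d mem(5)] by blast
    obtain u where u: "u \<in> Q" "g u = (m, u')" using gsurj[of "(m, u')"] memc mem uv' by auto
    obtain v where v: "v \<in> Q" "g v = (m, v')" using gsurj[of "(m, v')"] memc mem uv' by auto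
    have "distinct [w, u, v]" using u v g4 eqs uv'(3) by auto
    moreover have "inc lt w u" using incg[OF xyzw(4) u(1)] g4 eqs u(2) lt_same uv' by simp
    moreover have "inc lt w v" using incg[OF xyzw(4) v(1)] g4 eqs v(2) lt_same uv' by simp
    moreover have "inc lt u v" using incg[OF u(1) v(1)] u(2) v(2) lt_same uv' by simp
    ultimately show "\<exists>u\<in>Q. \<exists>v\<in>Q. distinct [w,u,v] \<and> inc lt w u \<and> inc lt w v \<and> inc lt u v"
      using u v by blast
  qed
qed

theorem lemma5p4:
  fixes P Q :: "'a set" and lt :: "'a \<Rightarrow> 'a \<Rightarrow> bool"
  assumes "six_stack P lt"
    and "retract P lt Q"
    and "iso_to_tower_of_sections Q lt"
    and "\<exists>i::nat. level P lt i \<noteq> {} \<and> level P lt i \<subseteq> Q"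
  shows "Q = P"
proof -
  obtain n where fp: "fin_poset P lt" and n1: "1 \<le> n" and ro: "ranked_of_rank P lt n"
    and cr: "\<forall>i<n. order_iso (levels P lt i (i+1)) lt crown6 crown6_lt"
    using assms(1) unfolding six_stack_def by blast
  have st: "stk P lt (rank P lt) n" using six_stk[OF fp ro n1 cr] .
  interpret S: stk P lt "rank P lt" n by (rule st)
  interpret D: stk P "\<lambda>x y. lt y x" "\<lambda>x. n - rank P lt x" n by (rule stk_dual[OF st])
  obtain f where QP: "Q \<subseteq> P" and fQ: "\<forall>x\<in>P. f x \<in> Q"
    and fm: "\<forall>x\<in>P. \<forall>y\<in>P. lt x y \<longrightarrow> f x = f y \<or> lt (f x) (f y)" and ffix: "\<forall>q\<in>Q. f q = q"
    using assms(2) unfolding retract_def by blast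
  note T = tower_T[OF assms(3)]
  have fmd: "\<forall>x\<in>P. \<forall>y\<in>P. lt y x \<longrightarrow> f x = f y \<or> lt (f y) (f x)"
  proof (intro ballI impI)
    fix x y assume "x \<in> P" "y \<in> P" "lt y x"
    thus "f x = f y \<or> lt (f y) (f x)" using fm[rule_format, of y x] by auto
  qed
  have e: "\<And>x y. inc (\<lambda>x y. lt y x) x y = inc lt x y" by (rule inc_dual)
  have T1d: "\<forall>x\<in>Q. \<exists>y\<in>Q. y \<noteq> x \<and> inc (\<lambda>x y. lt y x) x y" using T(1) by (simp only: e)
  have T2d: "\<forall>x\<in>Q. \<forall>y\<in>Q. \<forall>z\<in>Q. \<forall>w\<in>Q. distinct [x,y,z] \<and> inc (\<lambda>x y. lt y x) x y \<and> inc (\<lambda>x y. lt y x) x z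
     \<and> inc (\<lambda>x y. lt y x) y z \<and> w \<noteq> x \<and> inc (\<lambda>x y. lt y x) x w \<longrightarrow>
     (\<exists>u\<in>Q. \<exists>v\<in>Q. distinct [w,u,v] \<and> inc (\<lambda>x y. lt y x) w u \<and> inc (\<lambda>x y. lt y x) w v \<and> inc (\<lambda>x y. lt y x) u v)"
    using T(2) by (simp only: e)
  obtain i where i: "level P lt i \<noteq> {}" "level P lt i \<subseteq> Q" using assms(4) by blast
  have lev: "level P lt i = {x \<in> P. rank P lt x = i}" unfolding levels_def by auto
  have Li: "\<forall>x\<in>P. rank P lt x = i \<longrightarrow> x \<in> Q" using i(2) lev by blast
  have "i \<le> n" using i(1) lev S.bound by auto
  have up: "\<forall>x\<in>P. rank P lt x = i + j \<longrightarrow> x \<in> Q" if "i + j \<le> n" for j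
    using that
  proof (induction j)
    case 0 thus ?case using Li by simp
  next
    case (Suc j)
    have "\<forall>x\<in>P. rank P lt x = Suc (i + j) \<longrightarrow> x \<in> Q"
      using S.step_up[OF QP fQ fm ffix T(1) T(2), of "i + j"] Suc by simp
    thus ?case by simp
  qed
  have down: "\<forall>x\<in>P. rank P lt x = i - j \<longrightarrow> x \<in> Q" if "j \<le> i" for j
    using that
  proof (induction j)
    case 0 thus ?case using Li by simp
  next
    case (Suc j)
    have IH: "\<forall>x\<in>P. n - rank P lt x = n - (i - j) \<longrightarrow> x \<in> Q"
    proof (intro ballI impI)
      fix x assume x: "x \<in> P" "n - rank P lt x = n - (i - j)"
      hence "rank P lt x = i - j" using S.bound[OF x(1)] \<open>i \<le> n\<close> by simp
      thus "x \<in> Q" using Suc x by simp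
    qed
    have tn: "n - (i - j) < n" using Suc.prems \<open>i \<le> n\<close> by simp
    have "\<forall>x\<in>P. n - rank P lt x = Suc (n - (i - j)) \<longrightarrow> x \<in> Q"
      using D.step_up[OF QP fQ fmd ffix T1d T2d IH tn] .
    moreover have "Suc (n - (i - j)) = n - (i - Suc j)" using Suc.prems \<open>i \<le> n\<close> by simp
    ultimately have A: "\<forall>x\<in>P. n - rank P lt x = n - (i - Suc j) \<longrightarrow> x \<in> Q" by simp
    show ?case
    proof (intro ballI impI)
      fix x assume x: "x \<in> P" "rank P lt x = i - Suc j"
      hence "n - rank P lt x = n - (i - Suc j)" by simp
      thus "x \<in> Q" using A x(1) by blast
    qed
  qed
  have "P \<subseteq> Q"
  proof
    fix x assume x: "x \<in> P"
    show "x \<in> Q"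
    proof (cases "i \<le> rank P lt x")
      case True
      hence e: "rank P lt x = i + (rank P lt x - i)" and le: "i + (rank P lt x - i) \<le> n" using S.bound[OF x] by auto
      show ?thesis using up[OF le, rule_format, OF x e] .
    next
      case False
      hence e: "rank P lt x = i - (i - rank P lt x)" and le: "i - rank P lt x \<le> i" by auto
      show ?thesis using down[OF le, rule_format, OF x e] .
    qed
  qed
  thus ?thesis using QP by blast
qed

end
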